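(* Let $m\in(0,1)$, let $U_s$ satisfy (P), and let $\alpha\in(0,1)$. For each $Y\ge0$, $c\mapsto\Phi^s_{\rm app}(Y;c)$ is holomorphic on $\{\mathrm{Im}\,c>0\}$. Moreover there is $\gamma_1\in(0,1)$ such that if $\mathrm{Im}\,c>0$ and $|c|<\gamma_1$, then $$\Phi^s_{\rm app}(0;c)=-c+\frac{\alpha}{(1-m^2)^{1/2}}+O(1)\,\alpha\,|c\log\mathrm{Im}\,c|,\qquad \partial_Y\Phi^s_{\rm app}(0;c)=1+O(1)\,\alpha\,|\log\mathrm{Im}\,c|,$$ where $O(1)$ denotes quantities bounded by a constant independent of $\alpha$ and $c$.
   Context: (P) denotes: $U_s\in C^3([0,\infty))$, $U_s(0)=0$, $U_s>0$ on $(0,\infty)$, $U_s\to1$ as $Y\to\infty$, $U_s'(0)=1$, $s_1e^{-s_0Y}\le U_s'\le s_2e^{-s_0Y}$ for constants $s_0,s_1,s_2>0$, $H(Y):=\frac{-U_s''(1-m^2U_s^2)-2m^2U_s(U_s')^2}{|U_s''|+(U_s')^2}\ge\sigma_1>0$, and $|U_s'''/U_s''|+|U_s''|/U_s'+(1-U_s)/U_s'\le\sigma_2$. Principal branches of $\log$ and powers are used. Definitions: $A(Y)=1-m^2(U_s(Y)-c)^2$, $A_\infty=1-m^2(1-c)^2$, $\beta=\alpha A_\infty^{1/2}$; $\varphi_+(Y)=U_s(Y)-c$, $\varphi_-(Y)=(U_s(Y)-c)\int_1^Y\frac{dX}{(U_s(X)-c)^2}-m^2(U_s(Y)-c)Y$;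 $\varphi_{1,\alpha}(Y)=-2e^{-\beta Y}\varphi_+(Y)\int_0^Y\varphi_-(X)A^{-2}(X)U_s'(X)\,dX-2e^{-\beta Y}\varphi_-(Y)\int_Y^\infty\varphi_+(X)A^{-2}(X)U_s'(X)\,dX$; $\Phi^s_{\rm app}(Y;c)=e^{-\beta Y}(U_s(Y)-c)+\beta\varphi_{1,\alpha}(Y)$. *)

theory Defs
  imports "HOL-Analysis.Analysis"
begin

definition propP ::
  "real \<Rightarrow> (real \<Rightarrow> real) \<Rightarrow> (real \<Rightarrow> real) \<Rightarrow> (real \<Rightarrow> real) \<Rightarrow> (real \<Rightarrow> real) \<Rightarrow> bool" where
  "propP m U U1 U2 U3 \<longleftrightarrow>
     (\<forall>Y\<ge>0. (U has_real_derivative U1 Y) (at Y within {0..})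
            \<and> (U1 has_real_derivative U2 Y) (at Y within {0..})
            \<and> (U2 has_real_derivative U3 Y) (at Y within {0..}))
   \<and> continuous_on {0..} U3
   \<and> U 0 = 0
   \<and> (\<forall>Y>0. U Y > 0)
   \<and> (U \<longlongrightarrow> 1) at_top
   \<and> U1 0 = 1
   \<and> (\<exists>s0 s1 s2. s0 > 0 \<and> s1 > 0 \<and> s2 > 0 \<and>
        (\<forall>Y\<ge>0. s1 * exp (- s0 * Y) \<le> U1 Y \<and> U1 Y \<le> s2 * exp (- s0 * Y)))
   \<and> (\<exists>\<sigma>1>0. \<forall>Y\<ge>0.
        (- U2 Y * (1 - m\<^sup>2 * (U Y)\<^sup>2) - 2 * m\<^sup>2 * U Y * (U1 Y)\<^sup>2)
          / (\<bar>U2 Y\<bar> + (U1 Y)\<^sup>2) \<ge> \<sigma>1)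
   \<and> (\<exists>\<sigma>2. \<forall>Y\<ge>0.
        \<bar>U3 Y / U2 Y\<bar> + \<bar>U2 Y\<bar> / U1 Y + (1 - U Y) / U1 Y \<le> \<sigma>2)"

definition oint :: "real \<Rightarrow> real \<Rightarrow> (real \<Rightarrow> complex) \<Rightarrow> complex" where
  "oint a b f = (if a \<le> b then integral {a..b} f else - integral {b..a} f)"

definition Acoef :: "real \<Rightarrow> (real \<Rightarrow> real) \<Rightarrow> complex \<Rightarrow> real \<Rightarrow> complex" where
  "Acoef m U c Y = 1 - (complex_of_real m)\<^sup>2 * (complex_of_real (U Y) - c)\<^sup>2"

definition Ainf :: "real \<Rightarrow> complex \<Rightarrow> complex" where
  "Ainf m c = 1 - (complex_of_real m)\<^sup>2 * (1 - c)\<^sup>2"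

definition beta :: "real \<Rightarrow> real \<Rightarrow> complex \<Rightarrow> complex" where
  "beta m \<alpha> c = complex_of_real \<alpha> * csqrt (Ainf m c)"

definition phi_plus :: "(real \<Rightarrow> real) \<Rightarrow> complex \<Rightarrow> real \<Rightarrow> complex" where
  "phi_plus U c Y = complex_of_real (U Y) - c"

definition phi_minus :: "real \<Rightarrow> (real \<Rightarrow> real) \<Rightarrow> complex \<Rightarrow> real \<Rightarrow> complex" where
  "phi_minus m U c Y =
     (complex_of_real (U Y) - c) * oint 1 Y (\<lambda>X. 1 / (complex_of_real (U X) - c)\<^sup>2)
     - (complex_of_real m)\<^sup>2 * (complex_of_real (U Y) - c) * complex_of_real Y"

definition phi1 ::
  "real \<Rightarrow> (real \<Rightarrow> real) \<Rightarrow> (real \<Rightarrow> real) \<Rightarrow> real \<Rightarrow> complex \<Rightarrow> real \<Rightarrow> complex" where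
  "phi1 m U U1 \<alpha> c Y =
     - 2 * exp (- beta m \<alpha> c * complex_of_real Y) * phi_plus U c Y *
         integral {0..Y} (\<lambda>X. phi_minus m U c X / (Acoef m U c X)\<^sup>2 * complex_of_real (U1 X))
     - 2 * exp (- beta m \<alpha> c * complex_of_real Y) * phi_minus m U c Y *
         integral {Y..} (\<lambda>X. phi_plus U c X / (Acoef m U c X)\<^sup>2 * complex_of_real (U1 X))"

definition Phi_app ::
  "real \<Rightarrow> (real \<Rightarrow> real) \<Rightarrow> (real \<Rightarrow> real) \<Rightarrow> real \<Rightarrow> complex \<Rightarrow> real \<Rightarrow> complex" where
  "Phi_app m U U1 \<alpha> c Y =
     exp (- beta m \<alpha> c * complex_of_real Y) * (complex_of_real (U Y) - c)
     + beta m \<alpha> c * phi1 m U U1 \<alpha> c Y"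

end

theory Submission
  imports Defs "HOL-Complex_Analysis.Complex_Analysis"
begin

locale LS =
  fixes m :: real and U U1 U2 U3 :: "real \<Rightarrow> real"
  assumes m0: "0 < m" and m1: "m < 1" and P: "propP m U U1 U2 U3"
begin

lemma dU: "Y \<ge> 0 \<Longrightarrow> (U has_real_derivative U1 Y) (at Y within {0..})"
  and dU1: "Y \<ge> 0 \<Longrightarrow> (U1 has_real_derivative U2 Y) (at Y within {0..})"
  and dU2: "Y \<ge> 0 \<Longrightarrow> (U2 has_real_derivative U3 Y) (at Y within {0..})"
  using P by (auto simp: propP_def)

lemma U0: "U 0 = 0" and U10: "U1 0 = 1" and Upos: "Y > 0 \<Longrightarrow> U Y > 0"
  and Ulim: "(U \<longlongrightarrow> 1) at_top"
  using P by (auto simp: propP_def)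

lemma s_ex: "\<exists>s0 s1 s2. s0 > 0 \<and> s1 > 0 \<and> s2 > 0 \<and>
        (\<forall>Y\<ge>0. s1 * exp (- s0 * Y) \<le> U1 Y \<and> U1 Y \<le> s2 * exp (- s0 * Y))"
  using P by (auto simp: propP_def)

lemma contU: "continuous_on {0..} U"
  by (rule continuous_on_vector_derivative[where f'=U1])
     (use dU in \<open>auto simp: has_real_derivative_iff_has_vector_derivative\<close>)
lemma contU1: "continuous_on {0..} U1"
  by (rule continuous_on_vector_derivative[where f'=U2])
     (use dU1 in \<open>auto simp: has_real_derivative_iff_has_vector_derivative\<close>)
lemma contU2: "continuous_on {0..} U2"
  by (rule continuous_on_vector_derivative[where f'=U3])
     (use dU2 in \<open>auto simp: has_real_derivative_iff_has_vector_derivative\<close>)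

lemma U1pos: "Y \<ge> 0 \<Longrightarrow> U1 Y > 0"
  using s_ex by (smt (verit) exp_gt_zero mult_pos_pos)

lemma U_FTC: assumes "0 \<le> x" "x \<le> y" shows "(U1 has_integral (U y - U x)) {x..y}"
proof -
  have "(U has_vector_derivative U1 t) (at t within {x..y})" if "t \<in> {x..y}" for t
    using dU[of t] that assms
    by (auto simp: has_real_derivative_iff_has_vector_derivative
             intro: has_vector_derivative_within_subset)
  then show ?thesis using fundamental_theorem_of_calculus[OF assms(2)] by blast
qed

lemma Umono: assumes "0 \<le> x" "x \<le> y" shows "U x \<le> U y"
proof -
  have "0 \<le> U y - U x"
  proof (rule has_integral_nonneg[OF U_FTC[OF assms]])
    fix t assume "t \<in> {x..y}" then show "0 \<le> U1 t" using U1pos[of t] assms by auto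
  qed
  then show ?thesis by simp
qed

lemma Ule1: assumes "0 \<le> x" shows "U x \<le> 1"
proof (rule tendsto_lowerbound[OF Ulim])
  show "\<forall>\<^sub>F y in at_top. U x \<le> U y"
    using Umono assms by (auto simp: eventually_at_top_linorder intro!: exI[of _ x])
qed simp

lemma Uge0: "0 \<le> x \<Longrightarrow> 0 \<le> U x"
  using Umono[of 0 x] U0 by simp

end

lemma cmod_one_minus_sq_lb:
  fixes w :: complex and m :: real
  assumes "m > 0"
  shows "cmod (1 - (complex_of_real m)\<^sup>2 * w\<^sup>2) \<ge> m\<^sup>2 * (Im w)\<^sup>2"
proof -
  have e: "1 - (complex_of_real m)\<^sup>2 * w\<^sup>2 = (1 - of_real m * w) * (1 + of_real m * w)"
    by (simp add: algebra_simps power2_eq_square)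
  have a: "cmod (1 - of_real m * w) \<ge> m * \<bar>Im w\<bar>"
    using abs_Im_le_cmod[of "1 - of_real m * w"] assms by (simp add: abs_mult)
  have b: "cmod (1 + of_real m * w) \<ge> m * \<bar>Im w\<bar>"
    using abs_Im_le_cmod[of "1 + of_real m * w"] assms by (simp add: abs_mult)
  have "m\<^sup>2 * (Im w)\<^sup>2 = (m * \<bar>Im w\<bar>) * (m * \<bar>Im w\<bar>)"
    by (simp add: power2_eq_square)
  also have "\<dots> \<le> cmod (1 - of_real m * w) * cmod (1 + of_real m * w)"
    using a b assms by (intro mult_mono) auto
  finally show ?thesis by (simp add: e norm_mult)
qed

lemma nat_ceil_le: "nat \<lceil>x\<rceil> \<le> n \<Longrightarrow> x \<le> real n"
  using real_nat_ceiling_ge[of x] by (smt (verit) of_nat_mono)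

lemma k_deriv_gen:
  fixes M c z :: complex
  assumes nz: "1 - M\<^sup>2 * (z - c)\<^sup>2 \<noteq> 0" and M: "M \<noteq> 0"
  shows "((\<lambda>z. 1 / (2 * M\<^sup>2 * (1 - M\<^sup>2 * (z - c)\<^sup>2)))
     has_field_derivative ((z - c) / (1 - M\<^sup>2 * (z - c)\<^sup>2)\<^sup>2)) (at z)"
proof -
  define A where "A = 1 - M\<^sup>2 * (z - c)\<^sup>2"
  have nzA: "A \<noteq> 0" using nz unfolding A_def .
  show ?thesis
    apply (rule derivative_eq_intros refl)+
    apply (fold A_def)
    using nzA M by (auto simp: field_simps power2_eq_square)
qed

context LS begin

lemma A_lb: "Im c > 0 \<Longrightarrow> cmod (1 - (complex_of_real m)\<^sup>2 * (complex_of_real u - c)\<^sup>2) \<ge> m\<^sup>2 * (Im c)\<^sup>2"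
  using cmod_one_minus_sq_lb[OF m0, of "complex_of_real u - c"] by simp

lemma A_nz: "Im c > 0 \<Longrightarrow> 1 - (complex_of_real m)\<^sup>2 * (complex_of_real u - c)\<^sup>2 \<noteq> 0"
  using A_lb[of c u] m0 by (smt (verit) norm_zero zero_less_power mult_pos_pos)

lemma Acoef_nz: "Im c > 0 \<Longrightarrow> Acoef m U c X \<noteq> 0"
  using A_nz by (simp add: Acoef_def)

lemma Ainf_nz: "Im c > 0 \<Longrightarrow> Ainf m c \<noteq> 0"
  using A_nz[of c 1] by (simp add: Ainf_def)

lemma w_nz: "Im c > 0 \<Longrightarrow> complex_of_real u - c \<noteq> 0"
  by (metis Im_complex_of_real diff_zero less_irrefl right_minus_eq)

definition K :: "complex \<Rightarrow> real \<Rightarrow> complex" where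
  "K c X = 1 / (2 * (complex_of_real m)\<^sup>2 * Acoef m U c X)"

definition q :: "complex \<Rightarrow> real \<Rightarrow> complex" where
  "q c X = phi_plus U c X / (Acoef m U c X)\<^sup>2 * complex_of_real (U1 X)"

lemma k_deriv:
  assumes "Im c > 0"
  shows "((\<lambda>z. 1 / (2 * (complex_of_real m)\<^sup>2 * (1 - (complex_of_real m)\<^sup>2 * (z - c)\<^sup>2)))
     has_field_derivative ((of_real u - c) / (1 - (complex_of_real m)\<^sup>2 * (of_real u - c)\<^sup>2)\<^sup>2))
     (at (of_real u))"
proof -
  define A where "A = 1 - (complex_of_real m)\<^sup>2 * (of_real u - c)\<^sup>2"
  have nz: "A \<noteq> 0" using A_nz[OF assms] unfolding A_def .
  have m: "complex_of_real m \<noteq> 0" using m0 by simp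
  show ?thesis using k_deriv_gen[of "complex_of_real m" "of_real u" c] nz m
    unfolding A_def by simp
qed

lemma K_vd:
  assumes c: "Im c > 0" and X: "X \<ge> 0"
  shows "((K c) has_vector_derivative q c X) (at X within {0..})"
proof -
  have f: "((\<lambda>X. complex_of_real (U X)) has_vector_derivative of_real (U1 X)) (at X within {0..})"
    by (rule has_vector_derivative_of_real[OF dU[OF X]])
  have g: "((\<lambda>z. 1 / (2 * (complex_of_real m)\<^sup>2 * (1 - (complex_of_real m)\<^sup>2 * (z - c)\<^sup>2)))
     has_field_derivative ((of_real (U X) - c) / (1 - (complex_of_real m)\<^sup>2 * (of_real (U X) - c)\<^sup>2)\<^sup>2))
     (at (of_real (U X)) within (\<lambda>X. complex_of_real (U X)) ` {0..})"
    by (rule has_field_derivative_at_within[OF k_deriv[OF c]])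
  show ?thesis
    using field_vector_diff_chain_within[OF f g]
    by (simp add: o_def K_def[abs_def] q_def phi_plus_def Acoef_def mult.commute)
qed

lemma contq: "Im c > 0 \<Longrightarrow> continuous_on {0..} (q c)"
  unfolding q_def phi_plus_def Acoef_def
  using contU contU1 A_nz
  by (intro continuous_intros) auto

lemma U1_int: assumes Y: "Y \<ge> 0" shows "(U1 has_integral (1 - U Y)) {Y..}"
proof (rule has_integral_to_inf)
  fix y show "U1 integrable_on {Y..y}"
    by (rule integrable_continuous_interval, rule continuous_on_subset[OF contU1]) (use Y in auto)
next
  have ev: "\<forall>\<^sub>F y in at_top. U y - U Y = integral {Y..y} U1"
    using U_FTC Y by (auto simp: eventually_at_top_linorder intro!: exI[of _ Y] integral_unique[symmetric])
  have lim: "((\<lambda>y. U y - U Y) \<longlongrightarrow> 1 - U Y) at_top"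
    by (intro tendsto_diff Ulim tendsto_const)
  show "((\<lambda>y. integral {Y..y} U1) \<longlongrightarrow> 1 - U Y) at_top"
    by (rule Lim_transform_eventually[OF lim ev])
next
  fix y assume "Y \<le> y" then show "0 \<le> U1 y" using U1pos[of y] Y by simp
qed

lemma K_lim: assumes c: "Im c > 0"
  shows "((K c) \<longlongrightarrow> 1 / (2 * (complex_of_real m)\<^sup>2 * Ainf m c)) at_top"
proof -
  have u: "((\<lambda>x. complex_of_real (U x)) \<longlongrightarrow> 1) at_top"
    using tendsto_of_real[OF Ulim, where 'a=complex] by simp
  show ?thesis
  unfolding K_def[abs_def] Acoef_def Ainf_def
  using Ainf_nz[OF c] m0 unfolding Ainf_def
  by (intro tendsto_intros u) auto
qed

lemma Q_has_int:
  assumes c: "Im c > 0" and Y: "Y \<ge> 0"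
  shows "(q c has_integral (1 / (2 * (complex_of_real m)\<^sup>2 * Ainf m c) - K c Y)) {Y..}"
proof -
  define B where "B = (1 + cmod c) / (m\<^sup>2 * (Im c)\<^sup>2)\<^sup>2"
  have Bpos: "B \<ge> 0" unfolding B_def by simp
  define f where "f = (\<lambda>n::nat. \<lambda>X. if X \<in> {Y..real n} then q c X else 0)"
  define y where "y = (\<lambda>n::nat. integral {Y..real n} (q c))"
  show ?thesis
  proof (rule has_integral_dominated_convergence[where f=f and y=y and h="\<lambda>X. B * U1 X"])
    fix n
    have "q c integrable_on {Y..real n}"
      by (rule integrable_continuous_interval, rule continuous_on_subset[OF contq[OF c]]) (use Y in auto)
    then show "(f n has_integral y n) {Y..}"
      unfolding f_def y_def by (subst has_integral_restrict) auto
  next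
    show "(\<lambda>X. B * U1 X) integrable_on {Y..}"
      using has_integral_mult_right[OF U1_int[OF Y], of B] by blast
  next
    fix n show "\<forall>x\<in>{Y..}. norm (f n x) \<le> B * U1 x"
    proof
      fix x assume x: "x \<in> {Y..}"
      then have x0: "x \<ge> 0" using Y by simp
      have u1: "U1 x > 0" using U1pos[OF x0] .
      have "norm (q c x) \<le> B * U1 x"
      proof -
        have n1: "cmod (complex_of_real (U x) - c) \<le> 1 + cmod c"
          using norm_triangle_ineq4[of "complex_of_real (U x)" c] Ule1[OF x0] Uge0[OF x0] by simp
        have n2: "cmod (Acoef m U c x) \<ge> m\<^sup>2 * (Im c)\<^sup>2"
          using A_lb[OF c, of "U x"] by (simp add: Acoef_def)
        have pos: "m\<^sup>2 * (Im c)\<^sup>2 > 0" using m0 c by simp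
        have "norm (q c x) = cmod (complex_of_real (U x) - c) / (cmod (Acoef m U c x))\<^sup>2 * U1 x"
          using u1 by (simp add: q_def phi_plus_def norm_mult norm_divide norm_power)
        also have "\<dots> \<le> (1 + cmod c) / (m\<^sup>2 * (Im c)\<^sup>2)\<^sup>2 * U1 x"
        proof (rule mult_right_mono)
          have d: "(m\<^sup>2 * (Im c)\<^sup>2)\<^sup>2 \<le> (cmod (Acoef m U c x))\<^sup>2"
            by (rule power_mono[OF n2]) (use pos in simp)
          show "cmod (complex_of_real (U x) - c) / (cmod (Acoef m U c x))\<^sup>2 \<le> (1 + cmod c) / (m\<^sup>2 * (Im c)\<^sup>2)\<^sup>2"
            by (rule frac_le) (use n1 d pos in auto)
        qed (use u1 in simp)
        finally show ?thesis unfolding B_def .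
      qed
      then show "norm (f n x) \<le> B * U1 x"
        unfolding f_def using Bpos u1 by auto
    qed
  next
    show "\<forall>x\<in>{Y..}. (\<lambda>n. f n x) \<longlonglongrightarrow> q c x"
    proof
      fix x assume x: "x \<in> {Y..}"
      have "\<forall>\<^sub>F n in sequentially. f n x = q c x"
        by (rule eventually_mono[OF eventually_ge_at_top[of "nat \<lceil>x\<rceil>"]])
           (use x nat_ceil_le in \<open>auto simp: f_def\<close>)
      then show "(\<lambda>n. f n x) \<longlonglongrightarrow> q c x"
        by (rule tendsto_eventually)
    qed
  next
    have ev: "\<forall>\<^sub>F n in sequentially. y n = K c (real n) - K c Y"
    proof -
      have "\<forall>\<^sub>F n in sequentially. real n \<ge> Y"
        by (rule eventually_mono[OF eventually_ge_at_top[of "nat \<lceil>Y\<rceil>"]])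
           (use nat_ceil_le in auto)
      then show ?thesis
      proof eventually_elim
        case (elim n)
        have "(q c has_integral (K c (real n) - K c Y)) {Y..real n}"
        proof (rule fundamental_theorem_of_calculus[OF elim])
          fix x assume "x \<in> {Y..real n}"
          then show "(K c has_vector_derivative q c x) (at x within {Y..real n})"
            using K_vd[OF c, of x] Y by (auto intro: has_vector_derivative_within_subset)
        qed
        then show ?case unfolding y_def by (rule integral_unique)
      qed
    qed
    have "(\<lambda>n. K c (real n) - K c Y) \<longlonglongrightarrow> 1 / (2 * (complex_of_real m)\<^sup>2 * Ainf m c) - K c Y"
      by (rule tendsto_diff[OF filterlim_compose[OF K_lim[OF c] filterlim_real_sequentially] tendsto_const])
    then show "y \<longlonglongrightarrow> 1 / (2 * (complex_of_real m)\<^sup>2 * Ainf m c) - K c Y"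
      by (rule Lim_transform_eventually) (rule eventually_mono[OF ev], simp)
  qed
qed

lemma Q_eq:
  assumes c: "Im c > 0" and Y: "Y \<ge> 0"
  shows "integral {Y..} (\<lambda>X. phi_plus U c X / (Acoef m U c X)\<^sup>2 * complex_of_real (U1 X))
       = 1 / (2 * (complex_of_real m)\<^sup>2 * Ainf m c) - K c Y"
  using integral_unique[OF Q_has_int[OF c Y]] by (simp add: q_def[abs_def])

end

lemma open_lower: "open {w::complex. Im w < 0}"
  by (simp add: open_halfspace_Im_lt)

lemma GL:
  fixes h :: "complex \<Rightarrow> complex" and Uf V :: "real \<Rightarrow> real"
  assumes hol: "h holomorphic_on {w. Im w < 0}"
    and cU: "continuous_on {a..b} Uf" and cV: "continuous_on {a..b} V"
    and eq: "\<And>c t. Im c > 0 \<Longrightarrow> t \<in> {a..b} \<Longrightarrow> f c t = h (of_real (Uf t) - c) * of_real (V t)"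
  shows "(\<lambda>c. integral {a..b} (f c)) holomorphic_on {c. Im c > 0}"
proof -
  have mem: "Im c > 0 \<Longrightarrow> of_real u - c \<in> {w. Im w < 0}" for c u by simp
  have L: "(\<lambda>c. integral (cbox a b) (\<lambda>t. h (of_real (Uf t) - c) * of_real (V t))) holomorphic_on {c. Im c > 0}"
  proof (rule leibniz_rule_holomorphic[where fx="\<lambda>c t. - deriv h (of_real (Uf t) - c) * of_real (V t)"])
    fix c t assume c: "c \<in> {c. Im c > 0}" and t: "t \<in> cbox a b"
    have d1: "(h has_field_derivative deriv h (of_real (Uf t) - c)) (at (of_real (Uf t) - c))"
      using holomorphic_derivI[OF hol open_lower mem] c by auto
    have d2: "((\<lambda>c. of_real (Uf t) - c) has_field_derivative -1) (at c)"
      by (auto intro!: derivative_eq_intros)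
    have "((\<lambda>c. h (of_real (Uf t) - c)) has_field_derivative deriv h (of_real (Uf t) - c) * (-1)) (at c)"
      by (rule DERIV_chain2[OF d1 d2])
    then have "((\<lambda>c. h (of_real (Uf t) - c) * of_real (V t)) has_field_derivative
         deriv h (of_real (Uf t) - c) * (-1) * of_real (V t)) (at c)"
      by (rule DERIV_cmult_right)
    then show "((\<lambda>c. h (of_real (Uf t) - c) * of_real (V t)) has_field_derivative
         - deriv h (of_real (Uf t) - c) * of_real (V t)) (at c within {c. Im c > 0})"
      by (auto intro: has_field_derivative_at_within)
  next
    fix c :: complex assume c: "c \<in> {c. Im c > 0}"
    have "continuous_on {a..b} (\<lambda>t. h (of_real (Uf t) - c))"
      by (rule continuous_on_compose2[OF holomorphic_on_imp_continuous_on[OF hol]])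
         (use c in \<open>auto intro!: continuous_intros cU\<close>)
    then have "continuous_on {a..b} (\<lambda>t. h (of_real (Uf t) - c) * of_real (V t))"
      by (intro continuous_intros cV)
    then show "(\<lambda>t. h (of_real (Uf t) - c) * of_real (V t)) integrable_on cbox a b"
      by (simp add: integrable_continuous_interval)
  next
    have hd: "continuous_on {w. Im w < 0} (deriv h)"
      by (rule holomorphic_on_imp_continuous_on[OF holomorphic_deriv[OF hol open_lower]])
    have "continuous_on ({c. Im c > 0} \<times> cbox a b) (\<lambda>p. deriv h (of_real (Uf (snd p)) - fst p))"
      by (rule continuous_on_compose2[OF hd])
         (auto intro!: continuous_intros continuous_on_compose2[OF cU] simp: cbox_interval)
    moreover have "continuous_on ({c. Im c > 0} \<times> cbox a b) (\<lambda>p. V (snd p))"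
      by (auto intro!: continuous_intros continuous_on_compose2[OF cV] simp: cbox_interval)
    ultimately have "continuous_on ({c. Im c > 0} \<times> cbox a b)
        (\<lambda>p. - deriv h (of_real (Uf (snd p)) - fst p) * complex_of_real (V (snd p)))"
      by (intro continuous_intros)
    then show "continuous_on ({c. Im c > 0} \<times> cbox a b)
        (\<lambda>(c, t). - deriv h (of_real (Uf t) - c) * complex_of_real (V t))"
      by (simp add: case_prod_unfold)
  next
    show "convex {c. Im c > 0}" using convex_halfspace_Im_gt[of 0] by simp
  qed
  show ?thesis
    by (rule holomorphic_transform[OF L]) (use eq in \<open>auto simp: cbox_interval intro!: integral_cong\<close>)
qed

context LS begin

definition g :: "complex \<Rightarrow> real \<Rightarrow> complex" where
  "g c t = 1 / (complex_of_real (U t) - c)\<^sup>2"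
definition H :: "complex \<Rightarrow> real \<Rightarrow> complex" where
  "H c X = integral {0..X} (g c)"
definition G :: "complex \<Rightarrow> real \<Rightarrow> complex" where
  "G c X = oint 1 X (g c)"

lemma contg: "Im c > 0 \<Longrightarrow> continuous_on {0..} (g c)"
  unfolding g_def using contU w_nz by (intro continuous_intros) auto

lemma contK: "Im c > 0 \<Longrightarrow> continuous_on {0..} (K c)"
  unfolding K_def Acoef_def using contU A_nz m0 by (intro continuous_intros) auto

lemma g_int: "Im c > 0 \<Longrightarrow> 0 \<le> a \<Longrightarrow> (g c) integrable_on {a..b}"
  by (rule integrable_continuous_interval, rule continuous_on_subset[OF contg]) auto

lemma G_H: assumes c: "Im c > 0" and X: "X \<ge> 0" shows "G c X = H c X - H c 1"
proof (cases "1 \<le> X")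
  case True
  have "integral {0..1} (g c) + integral {1..X} (g c) = integral {0..X} (g c)"
    by (rule Henstock_Kurzweil_Integration.integral_combine) (use True g_int[OF c, of 0 X] in auto)
  then show ?thesis using True by (auto simp: G_def H_def oint_def eq_diff_eq add.commute)
next
  case False
  have "integral {0..X} (g c) + integral {X..1} (g c) = integral {0..1} (g c)"
    by (rule Henstock_Kurzweil_Integration.integral_combine) (use False X g_int[OF c, of 0 1] in auto)
  then show ?thesis using False by (auto simp: G_def H_def oint_def algebra_simps)
qed

lemma G_vd: assumes c: "Im c > 0" and X: "0 \<le> X" "X \<le> Y"
  shows "((G c) has_vector_derivative g c X) (at X within {0..Y})"
proof -
  have "((\<lambda>u. integral {0..u} (g c)) has_vector_derivative g c X) (at X within {0..Y})"
    by (rule integral_has_vector_derivative) (use X continuous_on_subset[OF contg[OF c]] in auto)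
  then have "((\<lambda>u. H c u - H c 1) has_vector_derivative g c X - 0) (at X within {0..Y})"
    unfolding H_def by (intro has_vector_derivative_diff) auto
  then have d: "((\<lambda>u. H c u - H c 1) has_vector_derivative g c X) (at X within {0..Y})" by simp
  show ?thesis
    by (rule has_vector_derivative_transform[OF _ _ d]) (use X G_H[OF c] in auto)
qed

lemma IBP:
  assumes c: "Im c > 0" and Y: "Y \<ge> 0"
  shows "integral {0..Y} (\<lambda>X. phi_minus m U c X / (Acoef m U c X)\<^sup>2 * complex_of_real (U1 X))
    = K c Y * G c Y - K c 0 * G c 0 - integral {0..Y} (\<lambda>X. K c X * g c X)
      - (complex_of_real m)\<^sup>2 * integral {0..Y} (\<lambda>X. complex_of_real X * q c X)"
proof -
  have I1: "((\<lambda>X. K c X * g c X + q c X * G c X) has_integral (K c Y * G c Y - K c 0 * G c 0)) {0..Y}"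
  proof (rule fundamental_theorem_of_calculus[OF Y])
    fix X assume X: "X \<in> {0..Y}"
    have k: "(K c has_vector_derivative q c X) (at X within {0..Y})"
      using K_vd[OF c, of X] X by (auto intro: has_vector_derivative_within_subset)
    show "((\<lambda>X. K c X * G c X) has_vector_derivative K c X * g c X + q c X * G c X) (at X within {0..Y})"
      using has_vector_derivative_mult[OF k G_vd[OF c]] X by auto
  qed
  have I2: "((\<lambda>X. K c X * g c X) has_integral integral {0..Y} (\<lambda>X. K c X * g c X)) {0..Y}"
    by (rule integrable_integral, rule integrable_continuous_interval)
       (intro continuous_intros continuous_on_subset[OF contK[OF c]] continuous_on_subset[OF contg[OF c]]; auto)
  have I3: "((\<lambda>X. complex_of_real X * q c X) has_integral integral {0..Y} (\<lambda>X. complex_of_real X * q c X)) {0..Y}"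
    by (rule integrable_integral, rule integrable_continuous_interval)
       (intro continuous_intros continuous_on_subset[OF contq[OF c]]; auto)
  have I: "((\<lambda>X. (K c X * g c X + q c X * G c X) - K c X * g c X - (complex_of_real m)\<^sup>2 * (complex_of_real X * q c X))
      has_integral (K c Y * G c Y - K c 0 * G c 0 - integral {0..Y} (\<lambda>X. K c X * g c X)
      - (complex_of_real m)\<^sup>2 * integral {0..Y} (\<lambda>X. complex_of_real X * q c X))) {0..Y}"
    by (intro has_integral_diff I1 I2 has_integral_mult_right I3)
  have eq: "phi_minus m U c X / (Acoef m U c X)\<^sup>2 * complex_of_real (U1 X) =
     (K c X * g c X + q c X * G c X) - K c X * g c X - (complex_of_real m)\<^sup>2 * (complex_of_real X * q c X)" for X
    by (simp add: phi_minus_def q_def phi_plus_def G_def g_def[abs_def] divide_inverse algebra_simps)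
  have "integral {0..Y} (\<lambda>X. phi_minus m U c X / (Acoef m U c X)\<^sup>2 * complex_of_real (U1 X))
     = integral {0..Y} (\<lambda>X. (K c X * g c X + q c X * G c X) - K c X * g c X - (complex_of_real m)\<^sup>2 * (complex_of_real X * q c X))"
    by (rule integral_cong, rule eq)
  also have "\<dots> = K c Y * G c Y - K c 0 * G c 0 - integral {0..Y} (\<lambda>X. K c X * g c X)
      - (complex_of_real m)\<^sup>2 * integral {0..Y} (\<lambda>X. complex_of_real X * q c X)"
    by (rule integral_unique[OF I])
  finally show ?thesis .
qed

end


lemma Anz_w: fixes M w :: complex assumes "Im w \<noteq> 0" "Im M = 0" "M \<noteq> 0"
  shows "1 - M\<^sup>2 * w\<^sup>2 \<noteq> 0"
proof -
  obtain r where r: "M = complex_of_real r" using assms(2) by (intro that[of "Re M"]) (simp add: complex_eq_iff)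
  have "r \<noteq> 0" using assms(3) r by simp
  have "\<exists>s>0. M\<^sup>2 = (complex_of_real s)\<^sup>2"
  proof (cases "r > 0")
    case True then show ?thesis using r by auto
  next
    case False then have "-r > 0" using \<open>r \<noteq> 0\<close> by simp
    then show ?thesis using r by (intro exI[of _ "-r"]) simp
  qed
  then obtain s where s: "s > 0" "M\<^sup>2 = (complex_of_real s)\<^sup>2" by blast
  have "s\<^sup>2 * (Im w)\<^sup>2 > 0" using assms(1) s by simp
  moreover have "cmod (1 - (complex_of_real s)\<^sup>2 * w\<^sup>2) \<ge> s\<^sup>2 * (Im w)\<^sup>2"
    using cmod_one_minus_sq_lb[of s w] s by simp
  ultimately show ?thesis using s(2) by auto
qed

context LS begin

lemma hol_H: "X \<ge> 0 \<Longrightarrow> (\<lambda>c. H c X) holomorphic_on {c. Im c > 0}"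
  unfolding H_def
  by (rule GL[where h="\<lambda>w. 1 / w\<^sup>2" and Uf=U and V="\<lambda>_. 1"])
     (auto intro!: holomorphic_intros continuous_on_subset[OF contU] simp: g_def)

lemma hol_K: "(\<lambda>c. K c X) holomorphic_on {c. Im c > 0}"
  unfolding K_def Acoef_def using A_nz m0 by (intro holomorphic_intros) auto

lemma hol_IKg: "Y \<ge> 0 \<Longrightarrow> (\<lambda>c. integral {0..Y} (\<lambda>X. K c X * g c X)) holomorphic_on {c. Im c > 0}"
  by (rule GL[where h="\<lambda>w. 1 / (2 * (complex_of_real m)\<^sup>2 * (1 - (complex_of_real m)\<^sup>2 * w\<^sup>2)) * (1 / w\<^sup>2)"
        and Uf=U and V="\<lambda>_. 1"])
     (use m0 Anz_w[of _ "complex_of_real m"] in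
       \<open>auto intro!: holomorphic_intros continuous_on_subset[OF contU] simp: g_def K_def Acoef_def\<close>)

lemma hol_IXq: "Y \<ge> 0 \<Longrightarrow> (\<lambda>c. integral {0..Y} (\<lambda>X. complex_of_real X * q c X)) holomorphic_on {c. Im c > 0}"
  by (rule GL[where h="\<lambda>w. w / (1 - (complex_of_real m)\<^sup>2 * w\<^sup>2)\<^sup>2"
        and Uf=U and V="\<lambda>t. t * U1 t"])
     (use m0 Anz_w[of _ "complex_of_real m"] in
       \<open>auto intro!: holomorphic_intros continuous_intros continuous_on_subset[OF contU] continuous_on_subset[OF contU1]
             simp: q_def phi_plus_def Acoef_def\<close>)

lemma Ainf_notin: assumes c: "Im c > 0" shows "Ainf m c \<notin> \<real>\<^sub>\<le>\<^sub>0"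
proof
  assume a: "Ainf m c \<in> \<real>\<^sub>\<le>\<^sub>0"
  have im: "Im (Ainf m c) = 0" and re: "Re (Ainf m c) \<le> 0" using a by (auto simp: complex_nonpos_Reals_iff)
  have im': "Im (Ainf m c) = 2 * m\<^sup>2 * (1 - Re c) * Im c"
    by (simp add: Ainf_def power2_eq_square algebra_simps)
  have re': "Re (Ainf m c) = 1 - m\<^sup>2 * ((1 - Re c)\<^sup>2 - (Im c)\<^sup>2)"
    by (simp add: Ainf_def power2_eq_square algebra_simps)
  have "1 - Re c = 0" using im im' c m0 by simp
  then have "Re (Ainf m c) = 1 + m\<^sup>2 * (Im c)\<^sup>2" using re' by simp
  then show False using re by (smt (verit) zero_le_power2 mult_nonneg_nonneg)
qed

lemma hol_Ainf: "(\<lambda>c. Ainf m c) holomorphic_on {c. Im c > 0}"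
    unfolding Ainf_def by (auto intro!: holomorphic_intros)

lemma hol_beta: "(\<lambda>c. beta m \<alpha> c) holomorphic_on {c. Im c > 0}"
proof -
  note p = hol_Ainf
  show ?thesis
    unfolding beta_def using Ainf_notin
    by (auto intro!: holomorphic_intros p)
qed

lemma hol_Phi: assumes Y: "Y \<ge> 0"
  shows "(\<lambda>c. Phi_app m U U1 \<alpha> c Y) holomorphic_on {c. Im c > 0}"
proof -
  define E where "E c = exp (- beta m \<alpha> c * complex_of_real Y)" for c
  define F where "F c = E c * (of_real (U Y) - c) + beta m \<alpha> c * (
     - 2 * E c * (of_real (U Y) - c) *
        (K c Y * (H c Y - H c 1) - K c 0 * (H c 0 - H c 1) - integral {0..Y} (\<lambda>X. K c X * g c X)
         - (complex_of_real m)\<^sup>2 * integral {0..Y} (\<lambda>X. complex_of_real X * q c X))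
     - 2 * E c * ((of_real (U Y) - c) * (H c Y - H c 1) - (complex_of_real m)\<^sup>2 * (of_real (U Y) - c) * of_real Y)
        * (1 / (2 * (complex_of_real m)\<^sup>2 * Ainf m c) - K c Y))" for c
  have eq: "F c = Phi_app m U U1 \<alpha> c Y" if c: "c \<in> {c. Im c > 0}" for c
  proof -
    have c': "Im c > 0" using c by simp
    have o1: "oint 1 Y (\<lambda>X. 1 / (complex_of_real (U X) - c)\<^sup>2) = H c Y - H c 1"
      using G_H[OF c' Y] by (simp add: G_def g_def[abs_def])
    note ibp = IBP[OF c' Y, unfolded G_H[OF c' Y] G_H[OF c' order.refl]]
    show ?thesis
      unfolding Phi_app_def phi1_def ibp Q_eq[OF c' Y]
      unfolding phi_minus_def phi_plus_def o1 F_def E_def by simp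
  qed
  have "F holomorphic_on {c. Im c > 0}"
    unfolding F_def E_def using Ainf_nz m0
    by (intro holomorphic_intros hol_H hol_K hol_IKg hol_IXq hol_beta hol_Ainf Y order.refl zero_le_one) auto
  then show ?thesis by (rule holomorphic_transform) (rule eq)
qed

end

context LS begin

lemma cmod_w: "cmod (complex_of_real u - c) = sqrt ((u - Re c)\<^sup>2 + (Im c)\<^sup>2)"
  by (simp add: cmod_def)

lemma ars_FTC:
  assumes b: "Im c > 0"
  shows "((\<lambda>X. U1 X / cmod (complex_of_real (U X) - c)) has_integral
          (arsinh ((U 1 - Re c) / Im c) - arsinh ((U 0 - Re c) / Im c))) {0..1}"
proof -
  define a where "a = Re c"
  define bb where "bb = Im c"
  have bb: "bb > 0" using b by (simp add: bb_def)
  have "((\<lambda>X. arsinh ((U X - a) / bb)) has_vector_derivative U1 X / cmod (complex_of_real (U X) - c))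
          (at X within {0..1})" if X: "X \<in> {0..1}" for X
  proof -
    have d1: "((\<lambda>X. (U X - a) / bb) has_field_derivative U1 X / bb) (at X within {0..1})"
      using dU[of X] X bb
      by (auto intro!: derivative_eq_intros intro: DERIV_subset)
    have d2: "DERIV arsinh ((U X - a) / bb) :> 1 / sqrt (((U X - a) / bb)\<^sup>2 + 1)"
      by (rule arsinh_real_has_field_derivative)
    have "((\<lambda>X. arsinh ((U X - a) / bb)) has_field_derivative
           1 / sqrt (((U X - a) / bb)\<^sup>2 + 1) * (U1 X / bb)) (at X within {0..1})"
      by (rule DERIV_chain'[OF d1 d2])
    moreover have "1 / sqrt (((U X - a) / bb)\<^sup>2 + 1) * (U1 X / bb) = U1 X / cmod (complex_of_real (U X) - c)"
    proof -
      have "((U X - a) / bb)\<^sup>2 + 1 = ((U X - a)\<^sup>2 + bb\<^sup>2) / bb\<^sup>2"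
        using bb by (simp add: field_simps power2_eq_square)
      then have "sqrt (((U X - a) / bb)\<^sup>2 + 1) = sqrt ((U X - a)\<^sup>2 + bb\<^sup>2) / bb"
        using bb by (simp add: real_sqrt_divide)
      moreover have "sqrt ((U X - a)\<^sup>2 + bb\<^sup>2) > 0" using bb by (simp add: add_nonneg_pos)
      ultimately show ?thesis using bb by (simp add: cmod_w a_def bb_def field_simps)
    qed
    ultimately have "((\<lambda>X. arsinh ((U X - a) / bb)) has_real_derivative U1 X / cmod (complex_of_real (U X) - c))
          (at X within {0..1})" by (rule DERIV_cong)
    then show ?thesis by (simp add: has_real_derivative_iff_has_vector_derivative)
  qed
  then have "((\<lambda>X. U1 X / cmod (complex_of_real (U X) - c)) has_integral
          (arsinh ((U 1 - a) / bb) - arsinh ((U 0 - a) / bb))) {0..1}"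
    by (intro fundamental_theorem_of_calculus) auto
  then show ?thesis by (simp add: a_def bb_def)
qed

lemma ln2_pos: "ln 2 > (0::real)" by simp

lemma ln5_le: "ln 5 \<le> 3 * ln (2::real)"
proof -
  have "ln (5::real) \<le> ln 8" by simp
  also have "\<dots> = 3 * ln 2" using ln_realpow[of "2::real" 3] by simp
  finally show ?thesis .
qed

lemma arsinh_mono_le: "x \<le> y \<Longrightarrow> arsinh x \<le> arsinh (y::real)"
  using arsinh_less_iff_real[of y x] by linarith

lemma arsinh_bound: fixes b :: real assumes b: "0 < b" "b < 1" shows "arsinh (2 / b) \<le> ln 5 - ln b"
proof -
  have "sqrt ((2/b)\<^sup>2 + 1) \<le> 3 / b"
  proof (rule real_le_lsqrt)
    have "b * b \<le> 1" using b by (intro mult_le_one) auto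
    then show "(2/b)\<^sup>2 + 1 \<le> (3/b)\<^sup>2" using b by (simp add: field_simps power2_eq_square)
  qed (use b in auto)
  then have "2 / b + sqrt ((2/b)\<^sup>2 + 1) \<le> 5 / b" by (simp add: field_simps)
  moreover have "0 < 2 / b + sqrt ((2/b)\<^sup>2 + 1)" using b by (simp add: add_pos_nonneg)
  ultimately have "ln (2 / b + sqrt ((2/b)\<^sup>2 + 1)) \<le> ln (5 / b)"
    by (subst ln_le_cancel_iff) (use b in auto)
  also have "\<dots> = ln 5 - ln b" using b by (simp add: ln_div)
  finally show ?thesis by (simp add: arsinh_real_def)
qed

lemma alg1: fixes p w q :: complex assumes "p \<noteq> 0" "w \<noteq> 0"
  shows "(p * (p - 0) + q * w) * (1 / (p * w)\<^sup>2) = q / (p\<^sup>2 * w) + 1 / w\<^sup>2"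
  using assms by (simp add: field_simps power2_eq_square)

lemma F_vd:
  assumes c: "Im c > 0" and X: "X \<in> {0..1}"
  shows "((\<lambda>X. -1 / (complex_of_real (U1 X) * (complex_of_real (U X) - c))) has_vector_derivative
          (complex_of_real (U2 X) / ((complex_of_real (U1 X))\<^sup>2 * (complex_of_real (U X) - c)) + g c X))
         (at X within {0..1})"
proof -
  define a where "a = (\<lambda>X. complex_of_real (U1 X) * (complex_of_real (U X) - c))"
  have X0: "X \<ge> 0" using X by simp
  have u1: "U1 X \<noteq> 0" using U1pos[OF X0] by simp
  have w: "complex_of_real (U X) - c \<noteq> 0" using w_nz[OF c] .
  have anz: "a X \<noteq> 0" using u1 w by (simp add: a_def)
  have d1: "((\<lambda>X. complex_of_real (U1 X)) has_vector_derivative of_real (U2 X)) (at X within {0..1})"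
    by (rule has_vector_derivative_of_real, rule DERIV_subset[OF dU1[OF X0]]) auto
  have d2: "((\<lambda>X. complex_of_real (U X) - c) has_vector_derivative of_real (U1 X) - 0) (at X within {0..1})"
    by (intro has_vector_derivative_diff has_vector_derivative_of_real DERIV_subset[OF dU[OF X0]]) auto
  have da: "(a has_vector_derivative
      (complex_of_real (U1 X) * (of_real (U1 X) - 0) + of_real (U2 X) * (complex_of_real (U X) - c)))
      (at X within {0..1})"
    unfolding a_def by (rule has_vector_derivative_mult[OF d1 d2])
  have dg: "((\<lambda>z. -1 / z) has_field_derivative 1 / (a X)\<^sup>2) (at (a X) within a ` {0..1})"
    using anz by (auto intro!: derivative_eq_intros simp: power2_eq_square field_simps)
  have "((\<lambda>z. -1 / z) \<circ> a has_vector_derivative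
      (complex_of_real (U1 X) * (of_real (U1 X) - 0) + of_real (U2 X) * (complex_of_real (U X) - c)) * (1 / (a X)\<^sup>2))
      (at X within {0..1})"
    by (rule field_vector_diff_chain_within[OF da dg])
  moreover have "(complex_of_real (U1 X) * (of_real (U1 X) - 0) + of_real (U2 X) * (complex_of_real (U X) - c)) * (1 / (a X)\<^sup>2)
     = complex_of_real (U2 X) / ((complex_of_real (U1 X))\<^sup>2 * (complex_of_real (U X) - c)) + g c X"
    using alg1[of "complex_of_real (U1 X)" "complex_of_real (U X) - c" "complex_of_real (U2 X)"] u1 w
    by (simp add: a_def g_def)
  ultimately show ?thesis by (simp add: a_def o_def)
qed

lemma KL: "\<exists>K1. \<forall>c. Im c > 0 \<and> cmod c < 1/2 \<and> cmod c < U 1 / 2 \<longrightarrow>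
            cmod (integral {0..1} (g c) + 1 / c) \<le> K1 * \<bar>ln (Im c)\<bar>"
proof -
  obtain s0 s1 s2 where s: "s0 > 0" "s1 > 0" "s2 > 0"
    "\<forall>Y\<ge>0. s1 * exp (- s0 * Y) \<le> U1 Y \<and> U1 Y \<le> s2 * exp (- s0 * Y)"
    using s_ex by blast
  define k where "k = s1 * exp (- s0)"
  have kpos: "k > 0" using s by (simp add: k_def)
  have U1k: "k \<le> U1 X" if X: "X \<in> {0..1}" for X
  proof -
    have "exp (- s0) \<le> exp (- s0 * X)" using X s by (simp add: mult_left_le)
    then have "k \<le> s1 * exp (- s0 * X)" using s by (simp add: k_def)
    then show ?thesis using s(4) X by force
  qed
  have "bounded (U2 ` {0..1})"
    by (rule compact_imp_bounded, rule compact_continuous_image, rule continuous_on_subset[OF contU2]) auto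
  then obtain Mb where Mb: "Mb > 0" "\<forall>x\<in>U2 ` {0..1}. norm x \<le> Mb" by (auto simp: bounded_pos)
  have Mb': "\<bar>U2 X\<bar> \<le> Mb" if "X \<in> {0..1}" for X using Mb(2) that by auto
  have U1p: "U 1 > 0" using Upos[of 1] by simp
  define K1 where "K1 = 2 / (k * U 1 * ln 2) + 8 * Mb / k^3"
  show ?thesis
  proof (intro exI[of _ K1] allI impI)
    fix c assume "Im c > 0 \<and> cmod c < 1/2 \<and> cmod c < U 1 / 2"
    then have c: "Im c > 0" "cmod c < 1/2" "cmod c < U 1 / 2" by auto
    define a where "a = Re c"
    define b where "b = Im c"
    have b0: "b > 0" using c by (simp add: b_def)
    have b1: "b < 1/2" using abs_Im_le_cmod[of c] c by (simp add: b_def)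
    have a1: "\<bar>a\<bar> < 1/2" using abs_Re_le_cmod[of c] c by (simp add: a_def)
    have lnb: "ln b < - ln 2"
    proof -
      have "ln b < ln (1/2)" using b0 b1 by simp
      then show ?thesis by (simp add: ln_div)
    qed
    define l where "l = - ln b"
    have "ln b < 0" using lnb ln2_pos by linarith
    then have labs: "\<bar>ln (Im c)\<bar> = l" by (simp add: l_def b_def)
    have l2: "l \<ge> ln 2" using lnb by (simp add: l_def)
    define F where "F = (\<lambda>X. -1 / (complex_of_real (U1 X) * (complex_of_real (U X) - c)))"
    define R where "R = (\<lambda>X. complex_of_real (U2 X) / ((complex_of_real (U1 X))\<^sup>2 * (complex_of_real (U X) - c)))"
    have FT: "((\<lambda>X. R X + g c X) has_integral F 1 - F 0) {0..1}"
      unfolding F_def R_def by (rule fundamental_theorem_of_calculus) (use F_vd[OF c(1)] in auto)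
    have contR: "continuous_on {0..1} R"
      unfolding R_def using w_nz[OF c(1)] U1pos[THEN less_imp_neq, THEN not_sym]
      by (intro continuous_intros continuous_on_subset[OF contU2] continuous_on_subset[OF contU1]
            continuous_on_subset[OF contU]) auto
    have Rint: "R integrable_on {0..1}" by (rule integrable_continuous_interval[OF contR])
    have "((\<lambda>X. R X + g c X - R X) has_integral F 1 - F 0 - integral {0..1} R) {0..1}"
      by (rule has_integral_diff[OF FT integrable_integral[OF Rint]])
    then have Jeq: "integral {0..1} (g c) = F 1 - F 0 - integral {0..1} R"
      by (simp add: integral_unique)
    have F0: "F 0 = 1 / c" using U0 U10 by (simp add: F_def)
    have JF: "integral {0..1} (g c) + 1 / c = F 1 - integral {0..1} R"
      using Jeq F0 by simp
    have w1: "cmod (complex_of_real (U 1) - c) \<ge> U 1 / 2"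
    proof -
      have "cmod (complex_of_real (U 1)) - cmod c \<le> cmod (complex_of_real (U 1) - c)"
        by (rule norm_triangle_ineq2)
      then show ?thesis using c(3) U1p by simp
    qed
    have F1: "cmod (F 1) \<le> 2 / (k * U 1)"
    proof -
      have k1: "k \<le> U1 1" using U1k[of 1] by simp
      have "cmod (F 1) = 1 / (U1 1 * cmod (complex_of_real (U 1) - c))"
        using U1pos[of 1] by (simp add: F_def norm_divide norm_mult)
      also have "\<dots> \<le> 1 / (k * (U 1 / 2))"
        using k1 w1 kpos U1p U1pos[of 1] w_nz[OF c(1), of "U 1"]
        by (intro divide_left_mono mult_mono) (auto simp: zero_less_mult_iff)
      also have "\<dots> = 2 / (k * U 1)" by simp
      finally show ?thesis .
    qed
    have ars: "((\<lambda>X. U1 X / cmod (complex_of_real (U X) - c)) has_integral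
          (arsinh ((U 1 - a) / b) - arsinh ((U 0 - a) / b))) {0..1}"
      using ars_FTC[OF c(1)] by (simp add: a_def b_def)
    have Rpt: "norm (R X) \<le> Mb / k^3 * (U1 X / cmod (complex_of_real (U X) - c))" if X: "X \<in> {0..1}" for X
    proof -
      define cm where "cm = cmod (complex_of_real (U X) - c)"
      have cm: "cm > 0" using w_nz[OF c(1)] by (simp add: cm_def)
      have kX: "k \<le> U1 X" using U1k[OF X] .
      have "norm (R X) = \<bar>U2 X\<bar> / ((U1 X)\<^sup>2 * cm)"
        by (simp add: R_def cm_def norm_divide norm_mult norm_power)
      also have "\<dots> \<le> Mb / (k\<^sup>2 * cm)"
        using Mb'[OF X] kX kpos cm by (intro frac_le mult_right_mono power_mono) auto
      also have "\<dots> = (Mb * k) / (k^3 * cm)" using kpos cm by (simp add: field_simps power2_eq_square power3_eq_cube)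
      also have "\<dots> \<le> (Mb * U1 X) / (k^3 * cm)"
        using kX Mb kpos cm by (intro divide_right_mono mult_left_mono) auto
      also have "\<dots> = Mb / k^3 * (U1 X / cm)" by simp
      finally show ?thesis by (simp add: cm_def)
    qed
    have Rb: "cmod (integral {0..1} R) \<le> Mb / k^3 * (arsinh ((U 1 - a) / b) - arsinh ((U 0 - a) / b))"
    proof -
      have "cmod (integral {0..1} R) \<le> integral {0..1} (\<lambda>X. Mb / k^3 * (U1 X / cmod (complex_of_real (U X) - c)))"
        by (rule integral_norm_bound_integral[OF Rint _ Rpt])
           (use has_integral_mult_right[OF ars, of "Mb / k^3"] in blast)
      also have "\<dots> = Mb / k^3 * (arsinh ((U 1 - a) / b) - arsinh ((U 0 - a) / b))"
        by (rule integral_unique[OF has_integral_mult_right[OF ars]])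
      finally show ?thesis .
    qed
    have A1: "arsinh ((U 1 - a) / b) \<le> arsinh (2 / b)"
    proof (rule arsinh_mono_le)
      have "U 1 - a \<le> 2" using Ule1[of 1] a1 by simp
      then show "(U 1 - a) / b \<le> 2 / b" using b0 by (simp add: divide_right_mono)
    qed
    have A2: "- arsinh ((U 0 - a) / b) \<le> arsinh (2 / b)"
    proof -
      have "- arsinh ((U 0 - a) / b) = arsinh (a / b)" using U0 by simp
      also have "\<dots> \<le> arsinh (2 / b)"
        by (rule arsinh_mono_le) (use a1 b0 in \<open>simp add: divide_right_mono\<close>)
      finally show ?thesis .
    qed
    have A3: "arsinh (2 / b) \<le> ln 5 + l" using arsinh_bound[OF b0] b1 by (simp add: l_def)
    have Rb2: "cmod (integral {0..1} R) \<le> Mb / k^3 * (8 * l)"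
    proof -
      have "arsinh ((U 1 - a) / b) - arsinh ((U 0 - a) / b) \<le> 8 * l"
        using A1 A2 A3 ln5_le l2 by linarith
      then have "Mb / k^3 * (arsinh ((U 1 - a) / b) - arsinh ((U 0 - a) / b)) \<le> Mb / k^3 * (8 * l)"
        using Mb kpos by (intro mult_left_mono) auto
      then show ?thesis using Rb by linarith
    qed
    have F1': "2 / (k * U 1) \<le> 2 / (k * U 1 * ln 2) * l"
    proof -
      have "2 / (k * U 1) = 2 / (k * U 1 * ln 2) * ln 2" using ln2_pos by (simp add: field_simps)
      also have "\<dots> \<le> 2 / (k * U 1 * ln 2) * l"
        using l2 kpos U1p ln2_pos by (intro mult_left_mono) auto
      finally show ?thesis .
    qed
    have "cmod (integral {0..1} (g c) + 1 / c) \<le> cmod (F 1) + cmod (integral {0..1} R)"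
      unfolding JF by (rule norm_triangle_ineq4)
    also have "\<dots> \<le> K1 * l"
      using F1 F1' Rb2 unfolding K1_def by (simp add: algebra_simps)
    finally show "cmod (integral {0..1} (g c) + 1 / c) \<le> K1 * \<bar>ln (Im c)\<bar>" using labs by simp
  qed
qed

end

context LS begin

lemma contG1: "Im c > 0 \<Longrightarrow> continuous_on {0..1} (G c)"
  by (rule continuous_on_vector_derivative[where f'="g c"]) (use G_vd in auto)

lemma phim_G: "phi_minus m U c X = (complex_of_real (U X) - c) * G c X
     - (complex_of_real m)\<^sup>2 * (complex_of_real (U X) - c) * complex_of_real X"
  by (simp add: phi_minus_def G_def g_def[abs_def])

lemma G0: "G c 0 = - integral {0..1} (g c)"
  by (simp add: G_def oint_def)

lemma deriv0:
  fixes \<alpha> :: real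
  assumes c: "Im c > 0"
  defines "J \<equiv> integral {0..1} (g c)"
  defines "Dm \<equiv> - 1 / c - J + (complex_of_real m)\<^sup>2 * c"
  defines "Q0 \<equiv> 1 / (2 * (complex_of_real m)\<^sup>2 * Ainf m c) - K c 0"
  defines "b \<equiv> beta m \<alpha> c"
  shows "((\<lambda>Y. Phi_app m U U1 \<alpha> c Y) has_vector_derivative
           (1 + b * c + b * ((2 * b * (c * J) - 2 * Dm) * Q0))) (at 0 within {0..})"
proof -
  let ?S = "{0..1::real}"
  let ?E = "\<lambda>Y. exp (- b * complex_of_real Y)"
  let ?u = "\<lambda>Y. complex_of_real (U Y) - c"
  let ?p = "\<lambda>X. phi_minus m U c X / (Acoef m U c X)\<^sup>2 * complex_of_real (U1 X)"
  let ?P = "\<lambda>Y. integral {0..Y} ?p"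
  let ?Q = "\<lambda>Y. integral {Y..} (\<lambda>X. (complex_of_real (U X) - c) / (Acoef m U c X)\<^sup>2 * complex_of_real (U1 X))"
  let ?pm = "\<lambda>Y. phi_minus m U c Y"
  define A0 where "A0 = Acoef m U c 0"
  have A0nz: "A0 \<noteq> 0" using Acoef_nz[OF c] by (simp add: A0_def)
  have cnz: "c \<noteq> 0" using c by auto
  have dE: "(?E has_vector_derivative - b) (at 0 within ?S)"
  proof -
    have "((\<lambda>z. exp (- b * z)) has_field_derivative - b) (at (of_real 0))"
      by (auto intro!: derivative_eq_intros)
    then show ?thesis by (rule has_vector_derivative_real_field)
  qed
  have du: "(?u has_vector_derivative 1) (at 0 within ?S)"
  proof -
    have "(?u has_vector_derivative of_real (U1 0) - 0) (at 0 within ?S)"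
      by (intro has_vector_derivative_diff has_vector_derivative_of_real DERIV_subset[OF dU]) auto
    then show ?thesis using U10 by simp
  qed
  have pm0: "?pm 0 = c * J"
    by (simp add: phim_G G0 J_def U0)
  have contp: "continuous_on ?S ?p"
  proof -
    have "continuous_on ?S (\<lambda>X. ((complex_of_real (U X) - c) * G c X
       - (complex_of_real m)\<^sup>2 * (complex_of_real (U X) - c) * complex_of_real X) / (Acoef m U c X)\<^sup>2 * complex_of_real (U1 X))"
      unfolding Acoef_def using A0_def A_nz[OF c]
      by (intro continuous_intros contG1[OF c] continuous_on_subset[OF contU] continuous_on_subset[OF contU1]) auto
    then show ?thesis by (simp add: phim_G)
  qed
  have dP: "(?P has_vector_derivative c * J / A0\<^sup>2) (at 0 within ?S)"
  proof -
    have "(?P has_vector_derivative ?p 0) (at 0 within ?S)"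
      by (rule integral_has_vector_derivative[OF contp]) auto
    then show ?thesis using pm0 U10 by (simp add: A0_def)
  qed
  have dpm: "(?pm has_vector_derivative Dm) (at 0 within ?S)"
  proof -
    have dG: "(G c has_vector_derivative g c 0) (at 0 within ?S)" by (rule G_vd[OF c]) auto
    have dX: "((\<lambda>Y. complex_of_real Y) has_vector_derivative 1) (at 0 within ?S)"
      using has_vector_derivative_of_real[OF DERIV_ident] by simp
    have "((\<lambda>Y. ?u Y * G c Y - (complex_of_real m)\<^sup>2 * ?u Y * complex_of_real Y) has_vector_derivative
         (?u 0 * g c 0 + 1 * G c 0) - ((complex_of_real m)\<^sup>2 * ?u 0 * 1 + ((complex_of_real m)\<^sup>2 * 1) * complex_of_real 0))
         (at 0 within ?S)"
      by (intro has_vector_derivative_diff has_vector_derivative_mult du dG dX has_vector_derivative_mult_right)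
    moreover have "(?u 0 * g c 0 + 1 * G c 0) - ((complex_of_real m)\<^sup>2 * ?u 0 * 1 + ((complex_of_real m)\<^sup>2 * 1) * complex_of_real 0) = Dm"
      using cnz by (simp add: U0 g_def G0 Dm_def J_def power2_eq_square field_simps)
    ultimately show ?thesis by (simp add: phim_G[abs_def])
  qed
  have dQ: "(?Q has_vector_derivative c / A0\<^sup>2) (at 0 within ?S)"
  proof -
    have "((\<lambda>Y. 1 / (2 * (complex_of_real m)\<^sup>2 * Ainf m c) - K c Y) has_vector_derivative 0 - q c 0) (at 0 within ?S)"
      by (intro has_vector_derivative_diff has_vector_derivative_const has_vector_derivative_within_subset[OF K_vd[OF c]]) auto
    then have "((\<lambda>Y. 1 / (2 * (complex_of_real m)\<^sup>2 * Ainf m c) - K c Y) has_vector_derivative c / A0\<^sup>2) (at 0 within ?S)"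
      using U0 U10 by (simp add: q_def phi_plus_def A0_def)
    then show ?thesis
    proof (rule has_vector_derivative_transform[rotated 2])
      show "0 \<in> ?S" by simp
    next
      fix x assume x: "x \<in> ?S"
      show "?Q x = 1 / (2 * (complex_of_real m)\<^sup>2 * Ainf m c) - K c x"
        by (rule Q_eq[OF c, unfolded phi_plus_def]) (use x in simp)
    qed
  qed
  have Q0v: "?Q 0 = Q0" using Q_eq[OF c order.refl, unfolded phi_plus_def] by (simp add: Q0_def)
  have dphi1: "((\<lambda>Y. phi1 m U U1 \<alpha> c Y) has_vector_derivative
     (-2 * ?E 0 * ?u 0 * (c * J / A0\<^sup>2) + (-2 * ?E 0 * 1 + -2 * (- b) * ?u 0) * ?P 0)
     - (2 * ?E 0 * ?pm 0 * (c / A0\<^sup>2) + (2 * ?E 0 * Dm + 2 * (- b) * ?pm 0) * ?Q 0)) (at 0 within ?S)"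
    unfolding phi1_def phi_plus_def b_def[symmetric]
    by (intro has_vector_derivative_diff has_vector_derivative_mult has_vector_derivative_mult_right dE du dP dpm dQ)
  have dPhi: "((\<lambda>Y. Phi_app m U U1 \<alpha> c Y) has_vector_derivative
     (?E 0 * 1 + (- b) * ?u 0) + b * ((-2 * ?E 0 * ?u 0 * (c * J / A0\<^sup>2) + (-2 * ?E 0 * 1 + -2 * (- b) * ?u 0) * ?P 0)
     - (2 * ?E 0 * ?pm 0 * (c / A0\<^sup>2) + (2 * ?E 0 * Dm + 2 * (- b) * ?pm 0) * ?Q 0))) (at 0 within ?S)"
    unfolding Phi_app_def b_def[symmetric]
    by (intro has_vector_derivative_add has_vector_derivative_mult has_vector_derivative_mult_right dE du dphi1)
  have val: "(?E 0 * 1 + (- b) * ?u 0) + b * ((-2 * ?E 0 * ?u 0 * (c * J / A0\<^sup>2) + (-2 * ?E 0 * 1 + -2 * (- b) * ?u 0) * ?P 0)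
     - (2 * ?E 0 * ?pm 0 * (c / A0\<^sup>2) + (2 * ?E 0 * Dm + 2 * (- b) * ?pm 0) * ?Q 0))
     = 1 + b * c + b * ((2 * b * (c * J) - 2 * Dm) * Q0)"
    using pm0 Q0v U0 by (simp add: algebra_simps)
  have "((\<lambda>Y. Phi_app m U U1 \<alpha> c Y) has_vector_derivative
           (1 + b * c + b * ((2 * b * (c * J) - 2 * Dm) * Q0))) (at 0 within ?S)"
    using dPhi unfolding val .
  then show ?thesis
    by (simp add: at_within_Icc_at_right at_within_Ici_at_right)
qed

end

context LS begin

lemma mm0: "m\<^sup>2 < 1"
proof -
  have "m^2 < 1^2" by (rule power_strict_mono) (use m0 m1 in auto)
  then show ?thesis by simp
qed

lemma mm: "0 < 1 - m\<^sup>2" "1 - m\<^sup>2 \<le> 1" "m\<^sup>2 \<le> 1"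
  using mm0 by auto

lemma nrm1: "cmod (1 - (complex_of_real m)\<^sup>2) = 1 - m\<^sup>2"
proof -
  have "1 - (complex_of_real m)\<^sup>2 = complex_of_real (1 - m\<^sup>2)" by simp
  then show ?thesis using mm by (simp only: norm_of_real)
qed

lemma nrm2: "cmod (complex_of_real (1 - m\<^sup>2)) = 1 - m\<^sup>2"
  using mm by (simp only: norm_of_real)

lemma Ainf_diff: assumes "cmod c \<le> 1"
  shows "cmod (Ainf m c - of_real (1 - m\<^sup>2)) \<le> 3 * cmod c"
proof -
  have e: "Ainf m c - of_real (1 - m\<^sup>2) = (complex_of_real m)\<^sup>2 * (c * (2 - c))"
    by (simp add: Ainf_def power2_eq_square algebra_simps)
  have "cmod (2 - c) \<le> 3" using norm_triangle_ineq4[of 2 c] assms by simp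
  then have "cmod (c * (2 - c)) \<le> cmod c * 3" by (simp add: norm_mult mult_left_mono)
  moreover have "cmod ((complex_of_real m)\<^sup>2) \<le> 1" using mm by (simp add: norm_power)
  ultimately have "cmod ((complex_of_real m)\<^sup>2) * cmod (c * (2 - c)) \<le> 1 * (cmod c * 3)"
    by (intro mult_mono) auto
  then show ?thesis unfolding e by (simp add: norm_mult)
qed

lemma Ainf_lb: assumes "cmod c \<le> 1" "cmod c \<le> (1 - m\<^sup>2) / 6"
  shows "cmod (Ainf m c) \<ge> (1 - m\<^sup>2) / 2"
proof -
  have "cmod (complex_of_real (1 - m\<^sup>2)) - cmod (Ainf m c) \<le> cmod (of_real (1 - m\<^sup>2) - Ainf m c)"
    by (rule norm_triangle_ineq2)
  also have "\<dots> = cmod (Ainf m c - of_real (1 - m\<^sup>2))" by (simp add: norm_minus_commute)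
  also have "\<dots> \<le> 3 * cmod c" by (rule Ainf_diff[OF assms(1)])
  finally show ?thesis using assms mm by (simp add: nrm1)
qed

lemma Ainf_ub: assumes "cmod c \<le> 1" shows "cmod (Ainf m c) \<le> 4"
proof -
  have "cmod (Ainf m c) \<le> cmod (complex_of_real (1 - m\<^sup>2)) + cmod (Ainf m c - of_real (1 - m\<^sup>2))"
    by (metis add.commute diff_add_cancel norm_triangle_ineq)
  then show ?thesis using Ainf_diff[OF assms] assms mm(2) nrm2 by linarith
qed

lemma A0_lb: assumes "cmod c \<le> 1/2" shows "cmod (1 - (complex_of_real m)\<^sup>2 * c\<^sup>2) \<ge> 1/2"
proof -
  have e: "cmod ((complex_of_real m)\<^sup>2 * c\<^sup>2) = m\<^sup>2 * (cmod c)\<^sup>2" by (simp add: norm_mult norm_power)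
  have "(cmod c)\<^sup>2 \<le> (1/2)\<^sup>2" by (rule power_mono) (use assms in auto)
  then have "m\<^sup>2 * (cmod c)\<^sup>2 \<le> 1 * (1/2)\<^sup>2" using mm by (intro mult_mono) auto
  then have "cmod ((complex_of_real m)\<^sup>2 * c\<^sup>2) \<le> 1 * (1/2)^2" using e by simp
  moreover have "cmod (1::complex) - cmod ((complex_of_real m)\<^sup>2 * c\<^sup>2) \<le> cmod (1 - (complex_of_real m)\<^sup>2 * c\<^sup>2)"
    by (rule norm_triangle_ineq2)
  ultimately show ?thesis by (simp add: power2_eq_square)
qed

lemma sqrt_diff: assumes "cmod c \<le> 1"
  shows "cmod (csqrt (Ainf m c) - of_real (sqrt (1 - m\<^sup>2))) \<le> 3 * cmod c / sqrt (1 - m\<^sup>2)"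
proof -
  define s where "s = csqrt (Ainf m c)"
  define s0 where "s0 = sqrt (1 - m\<^sup>2)"
  have s0: "s0 > 0" using mm by (simp add: s0_def)
  have sq: "s\<^sup>2 = Ainf m c" by (simp add: s_def)
  have s0sq: "(complex_of_real s0)\<^sup>2 = of_real (1 - m\<^sup>2)"
    using mm by (simp add: s0_def flip: of_real_power)
  have "Re (s + of_real s0) \<ge> s0" using Re_csqrt[of "Ainf m c"] by (simp add: s_def)
  then have lb: "cmod (s + of_real s0) \<ge> s0" using complex_Re_le_cmod order_trans by blast
  have "(s - of_real s0) * (s + of_real s0) = Ainf m c - of_real (1 - m\<^sup>2)"
    using sq s0sq by (simp add: algebra_simps power2_eq_square)
  then have "cmod (s - of_real s0) * cmod (s + of_real s0) \<le> 3 * cmod c"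
    using Ainf_diff[OF assms] by (metis norm_mult)
  then have "cmod (s - of_real s0) * s0 \<le> 3 * cmod c"
    using lb by (smt (verit) mult_left_mono norm_ge_zero)
  then show ?thesis using s0 by (simp add: s_def s0_def field_simps)
qed

lemma alg2: fixes A B M c :: complex
  assumes "A \<noteq> 0" "B \<noteq> 0" "M \<noteq> 0" "B - A = M\<^sup>2 * (1 - 2 * c)"
  shows "1 / (2 * M\<^sup>2 * A) - 1 / (2 * M\<^sup>2 * B) = (1 - 2 * c) / (2 * A * B)"
proof -
  have "1 / (2 * M\<^sup>2 * A) - 1 / (2 * M\<^sup>2 * B) = (B - A) / (2 * M\<^sup>2 * A * B)"
    using assms by (simp add: field_simps)
  also have "\<dots> = (1 - 2 * c) / (2 * A * B)"
    unfolding assms(4) using assms by (simp add: field_simps)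
  finally show ?thesis .
qed

lemma Q0_eq: assumes c: "Im c > 0"
  shows "1 / (2 * (complex_of_real m)\<^sup>2 * Ainf m c) - K c 0
         = (1 - 2 * c) / (2 * Ainf m c * (1 - (complex_of_real m)\<^sup>2 * c\<^sup>2))"
proof -
  have a: "Ainf m c \<noteq> 0" using Ainf_nz[OF c] .
  have b: "1 - (complex_of_real m)\<^sup>2 * c\<^sup>2 \<noteq> 0" using Acoef_nz[OF c, of 0] U0 by (simp add: Acoef_def)
  have mz: "complex_of_real m \<noteq> 0" using m0 by simp
  have K0: "K c 0 = 1 / (2 * (complex_of_real m)\<^sup>2 * (1 - (complex_of_real m)\<^sup>2 * c\<^sup>2))"
    using U0 by (simp add: K_def Acoef_def)
  have rel: "(1 - (complex_of_real m)\<^sup>2 * c\<^sup>2) - Ainf m c = (complex_of_real m)\<^sup>2 * (1 - 2 * c)"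
    by (simp add: Ainf_def power2_eq_square algebra_simps)
  show ?thesis unfolding K0 using alg2[OF a b mz rel] .
qed

end

lemma nm: fixes x y :: complex
  assumes "cmod x \<le> A" "cmod y \<le> B" shows "cmod (x * y) \<le> A * B"
proof -
  have "A \<ge> 0" using assms(1) norm_ge_zero order_trans by blast
  then show ?thesis unfolding norm_mult using assms by (intro mult_mono) auto
qed

context LS begin

lemma val0:
  assumes c: "Im c > 0"
  shows "Phi_app m U U1 \<alpha> c 0 = - c - 2 * beta m \<alpha> c * (c * integral {0..1} (g c))
           * (1 / (2 * (complex_of_real m)\<^sup>2 * Ainf m c) - K c 0)"
proof -
  have pm0: "phi_minus m U c 0 = c * integral {0..1} (g c)"
    by (simp add: phim_G G0 U0)
  show ?thesis
    unfolding Phi_app_def phi1_def Q_eq[OF c order.refl] pm0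
    by (simp add: U0 phi_plus_def)
qed

lemma alg3: fixes s A0 s0 c :: complex
  assumes "s \<noteq> 0" "A0 \<noteq> 0" "s0 \<noteq> 0"
  shows "2 * s * ((1 - 2 * c) / (2 * s\<^sup>2 * A0)) - 1 / s0 = ((s0 - s) - 2 * c * s0 + s * (1 - A0)) / (s * A0 * s0)"
  using assms by (simp add: field_simps power2_eq_square)

lemma est_c:
  fixes \<alpha> L :: real and c :: complex
  assumes \<alpha>: "0 < \<alpha>" "\<alpha> < 1" and c: "Im c > 0" "cmod c \<le> 1/2" "cmod c \<le> (1 - m\<^sup>2) / 6"
    and T: "cmod (integral {0..1} (g c) + 1 / c) \<le> L"
  shows "cmod (Phi_app m U U1 \<alpha> c 0 - (- c + of_real (\<alpha> / sqrt (1 - m\<^sup>2))))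
          \<le> \<alpha> * (cmod c * ((3 / sqrt (1 - m\<^sup>2) + 3) / (sqrt ((1 - m\<^sup>2) / 2) * (1/2) * sqrt (1 - m\<^sup>2)))
                         + cmod c * (4 * (4 / (1 - m\<^sup>2)) * L))"
    and "\<exists>D. ((\<lambda>Y. Phi_app m U U1 \<alpha> c Y) has_vector_derivative D) (at 0 within {0..})
          \<and> cmod (D - 1) \<le> \<alpha> * (1 + 2 * (4 / (1 - m\<^sup>2)) * (4 * L + 5))"
proof -
  define J where "J = integral {0..1} (g c)"
  define Tm where "Tm = J + 1 / c"
  define s where "s = csqrt (Ainf m c)"
  define s0 where "s0 = sqrt (1 - m\<^sup>2)"
  define \<sigma> where "\<sigma> = sqrt ((1 - m\<^sup>2) / 2)"
  define A0 where "A0 = 1 - (complex_of_real m)\<^sup>2 * c\<^sup>2"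
  define Q0 where "Q0 = 1 / (2 * (complex_of_real m)\<^sup>2 * Ainf m c) - K c 0"
  define QB where "QB = 4 / (1 - m\<^sup>2)"
  define b where "b = beta m \<alpha> c"
  have L0: "L \<ge> 0" using T norm_ge_zero order_trans by blast
  have TmL: "cmod Tm \<le> L" using T by (simp add: Tm_def J_def)
  have cnz: "c \<noteq> 0" using c by auto
  have c1: "cmod c \<le> 1" using c by simp
  have s0p: "s0 > 0" using mm by (simp add: s0_def)
  have s0le: "s0 \<le> 1" using mm by (simp add: s0_def)
  have \<sigma>p: "\<sigma> > 0" using mm by (simp add: \<sigma>_def)
  have Ainz: "Ainf m c \<noteq> 0" using Ainf_nz[OF c(1)] .
  have snz: "s \<noteq> 0" using Ainz by (simp add: s_def)
  have sq: "s\<^sup>2 = Ainf m c" by (simp add: s_def)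
  have sub: "cmod s \<le> 2"
  proof -
    have "cmod s = sqrt (cmod (Ainf m c))" by (simp add: s_def)
    also have "\<dots> \<le> sqrt (2\<^sup>2)" by (rule real_sqrt_le_mono) (use Ainf_ub[OF c1] in simp)
    finally show ?thesis by simp
  qed
  have slb: "cmod s \<ge> \<sigma>"
  proof -
    have "cmod s = sqrt (cmod (Ainf m c))" by (simp add: s_def)
    then show ?thesis using Ainf_lb[OF c1 c(3)] by (simp add: \<sigma>_def)
  qed
  have A0lb: "cmod A0 \<ge> 1/2" using A0_lb[OF c(2)] by (simp add: A0_def)
  have A0nz: "A0 \<noteq> 0" using A0lb by auto
  have Q0e: "Q0 = (1 - 2 * c) / (2 * s\<^sup>2 * A0)"
    using Q0_eq[OF c(1)] by (simp add: Q0_def sq A0_def)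
  have QB: "cmod Q0 \<le> QB"
  proof -
    have n1: "cmod (1 - 2 * c) \<le> 2"
      using norm_triangle_ineq4[of 1 "2 * c"] c(2) by (simp add: norm_mult)
    have n2: "cmod (2 * s\<^sup>2 * A0) \<ge> (1 - m\<^sup>2) / 2"
    proof -
      have "cmod (2 * s\<^sup>2 * A0) = 2 * cmod (Ainf m c) * cmod A0" by (simp add: norm_mult sq)
      moreover have "2 * ((1 - m\<^sup>2) / 2) * (1/2) \<le> 2 * cmod (Ainf m c) * cmod A0"
        using Ainf_lb[OF c1 c(3)] A0lb mm by (intro mult_mono) auto
      ultimately show ?thesis by simp
    qed
    have "cmod Q0 = cmod (1 - 2 * c) / cmod (2 * s\<^sup>2 * A0)" by (simp add: Q0e norm_divide)
    also have "\<dots> \<le> 2 / ((1 - m\<^sup>2) / 2)"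
      by (rule frac_le) (use n1 n2 mm in auto)
    also have "\<dots> = QB" by (simp add: QB_def)
    finally show ?thesis .
  qed
  have QB0: "QB \<ge> 0" using mm by (simp add: QB_def)
  have cJ: "c * J = c * Tm - 1" using cnz by (simp add: Tm_def field_simps)
  have bdef: "b = complex_of_real \<alpha> * s" by (simp add: b_def beta_def s_def)
  define N where "N = (complex_of_real s0 - s) - 2 * c * complex_of_real s0 + s * (1 - A0)"
  have Nb: "cmod N \<le> cmod c * (3 / s0 + 3)"
  proof -
    have n1: "cmod (complex_of_real s0 - s) \<le> 3 * cmod c / s0"
      using sqrt_diff[OF c1] by (simp add: s_def s0_def norm_minus_commute)
    have n2: "cmod (2 * c * complex_of_real s0) \<le> 2 * cmod c"
      using s0le s0p by (simp add: norm_mult mult_left_le)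
    have n3: "cmod (s * (1 - A0)) \<le> cmod c"
    proof -
      have cc: "(cmod c)\<^sup>2 \<le> cmod c * (1/2)"
        unfolding power2_eq_square by (rule mult_left_mono) (use c(2) in auto)
      have "cmod (1 - A0) = m\<^sup>2 * (cmod c)\<^sup>2" by (simp add: A0_def norm_mult norm_power)
      also have "\<dots> \<le> 1 * (cmod c * (1/2))"
        using mm cc by (intro mult_mono) auto
      finally have "cmod (1 - A0) \<le> cmod c / 2" by simp
      then have "cmod (s * (1 - A0)) \<le> 2 * (cmod c / 2)" by (rule nm[OF sub])
      then show ?thesis by simp
    qed
    have t1: "cmod N \<le> cmod ((complex_of_real s0 - s) - 2 * c * complex_of_real s0) + cmod (s * (1 - A0))"
      unfolding N_def by (rule norm_triangle_ineq)
    have t2: "cmod ((complex_of_real s0 - s) - 2 * c * complex_of_real s0) \<le> cmod (complex_of_real s0 - s) + cmod (2 * c * complex_of_real s0)"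
      by (rule norm_triangle_ineq4)
    have "cmod N \<le> 3 * cmod c / s0 + 2 * cmod c + cmod c" using t1 t2 n1 n2 n3 by linarith
    also have "\<dots> = cmod c * (3 / s0 + 3)" by (simp add: field_simps)
    finally show ?thesis .
  qed
  have Dlb: "cmod (s * A0 * complex_of_real s0) \<ge> \<sigma> * (1/2) * s0"
  proof -
    have "cmod (s * A0 * complex_of_real s0) = cmod s * cmod A0 * s0" using s0p by (simp add: norm_mult)
    moreover have "\<sigma> * (1/2) * s0 \<le> cmod s * cmod A0 * s0"
      using slb A0lb \<sigma>p s0p by (intro mult_mono) auto
    ultimately show ?thesis by simp
  qed
  have Term1: "cmod (2 * s * Q0 - 1 / complex_of_real s0) \<le> cmod c * ((3 / s0 + 3) / (\<sigma> * (1/2) * s0))"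
  proof -
    have "2 * s * Q0 - 1 / complex_of_real s0 = N / (s * A0 * complex_of_real s0)"
      unfolding Q0e N_def by (rule alg3) (use snz A0nz s0p in auto)
    then have "cmod (2 * s * Q0 - 1 / complex_of_real s0) = cmod N / cmod (s * A0 * complex_of_real s0)"
      by (simp add: norm_divide)
    also have "\<dots> \<le> (cmod c * (3 / s0 + 3)) / (\<sigma> * (1/2) * s0)"
      by (rule frac_le) (use Nb Dlb \<sigma>p s0p in auto)
    finally show ?thesis unfolding times_divide_eq_right .
  qed
  have Term2: "cmod (2 * s * Q0 * c * Tm) \<le> cmod c * (4 * QB * L)"
  proof -
    have "cmod (2 * s * Q0 * c * Tm) = 2 * cmod s * cmod Q0 * cmod c * cmod Tm" by (simp add: norm_mult)
    also have "\<dots> \<le> 2 * 2 * QB * cmod c * L"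
      using sub QB TmL QB0 by (intro mult_mono) auto
    finally show ?thesis by (simp add: algebra_simps)
  qed
  have X: "Phi_app m U U1 \<alpha> c 0 - (- c + of_real (\<alpha> / sqrt (1 - m\<^sup>2)))
      = complex_of_real \<alpha> * ((2 * s * Q0 - 1 / complex_of_real s0) - 2 * s * Q0 * c * Tm)"
    unfolding val0[OF c(1)] Q0_def[symmetric] J_def[symmetric] b_def[symmetric] bdef cJ
    by (simp add: s0_def algebra_simps divide_inverse)
  show "cmod (Phi_app m U U1 \<alpha> c 0 - (- c + of_real (\<alpha> / sqrt (1 - m\<^sup>2))))
          \<le> \<alpha> * (cmod c * ((3 / sqrt (1 - m\<^sup>2) + 3) / (sqrt ((1 - m\<^sup>2) / 2) * (1/2) * sqrt (1 - m\<^sup>2)))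
                         + cmod c * (4 * (4 / (1 - m\<^sup>2)) * L))"
  proof -
    have "cmod ((2 * s * Q0 - 1 / complex_of_real s0) - 2 * s * Q0 * c * Tm)
        \<le> cmod c * ((3 / s0 + 3) / (\<sigma> * (1/2) * s0)) + cmod c * (4 * QB * L)"
      using norm_triangle_ineq4[of "2 * s * Q0 - 1 / complex_of_real s0" "2 * s * Q0 * c * Tm"] Term1 Term2 by linarith
    then show ?thesis unfolding X using \<alpha>
      by (simp add: norm_mult s0_def \<sigma>_def QB_def mult_left_mono)
  qed
  define Dm where "Dm = - 1 / c - J + (complex_of_real m)\<^sup>2 * c"
  have dv: "((\<lambda>Y. Phi_app m U U1 \<alpha> c Y) has_vector_derivative
           (1 + b * c + b * ((2 * b * (c * J) - 2 * Dm) * Q0))) (at 0 within {0..})"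
    unfolding b_def J_def Dm_def Q0_def by (rule deriv0[OF c(1)])
  have bb: "cmod b \<le> 2 * \<alpha>"
    using sub \<alpha> by (simp add: bdef norm_mult mult_left_mono)
  have b2: "cmod b \<le> 2" using bb \<alpha> by linarith
  have cJb: "cmod (c * J) \<le> L / 2 + 1"
  proof -
    have "cmod (c * Tm) \<le> (1/2) * L" by (rule nm[OF c(2) TmL])
    then show ?thesis unfolding cJ using norm_triangle_ineq4[of "c * Tm" 1] by simp
  qed
  have Dmb: "cmod Dm \<le> L + 1/2"
  proof -
    have e: "Dm = - Tm + (complex_of_real m)\<^sup>2 * c" by (simp add: Dm_def Tm_def)
    have "cmod ((complex_of_real m)\<^sup>2 * c) \<le> 1 * (1/2)"
      by (rule nm) (use mm c(2) in \<open>auto simp: norm_power\<close>)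
    then show ?thesis unfolding e using norm_triangle_ineq[of "- Tm" "(complex_of_real m)\<^sup>2 * c"] TmL by simp
  qed
  have inner: "cmod (2 * b * (c * J) - 2 * Dm) \<le> 4 * L + 5"
  proof -
    have "cmod (2 * b * (c * J)) \<le> (2 * 2) * (L / 2 + 1)"
      by (rule nm[OF _ cJb]) (use b2 in \<open>simp add: norm_mult\<close>)
    moreover have "cmod (2 * Dm) \<le> 2 * (L + 1/2)" using Dmb by (simp add: norm_mult)
    ultimately show ?thesis using norm_triangle_ineq4[of "2 * b * (c * J)" "2 * Dm"] by simp
  qed
  have t1: "cmod (b * c) \<le> 2 * \<alpha> * (1/2)" by (rule nm[OF bb c(2)])
  have t2: "cmod (b * ((2 * b * (c * J) - 2 * Dm) * Q0)) \<le> 2 * \<alpha> * ((4 * L + 5) * QB)"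
    by (rule nm[OF bb nm[OF inner QB]])
  show "\<exists>D. ((\<lambda>Y. Phi_app m U U1 \<alpha> c Y) has_vector_derivative D) (at 0 within {0..})
          \<and> cmod (D - 1) \<le> \<alpha> * (1 + 2 * (4 / (1 - m\<^sup>2)) * (4 * L + 5))"
  proof (intro exI conjI, rule dv)
    have "cmod (1 + b * c + b * ((2 * b * (c * J) - 2 * Dm) * Q0) - 1)
        \<le> cmod (b * c) + cmod (b * ((2 * b * (c * J) - 2 * Dm) * Q0))"
      by (simp add: norm_triangle_ineq)
    also have "\<dots> \<le> \<alpha> * (1 + 2 * QB * (4 * L + 5))" using t1 t2 by (simp add: algebra_simps)
    finally show "cmod (1 + b * c + b * ((2 * b * (c * J) - 2 * Dm) * Q0) - 1)
        \<le> \<alpha> * (1 + 2 * (4 / (1 - m\<^sup>2)) * (4 * L + 5))" by (simp add: QB_def)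
  qed
qed

lemma main2: "\<exists>\<gamma>1\<in>{0<..<1::real}. \<exists>C::real. \<forall>\<alpha>\<in>{0<..<1::real}. \<forall>c.
            Im c > 0 \<and> cmod c < \<gamma>1 \<longrightarrow>
              cmod (Phi_app m U U1 \<alpha> c 0 - (- c + complex_of_real (\<alpha> / sqrt (1 - m\<^sup>2))))
                \<le> C * \<alpha> * (cmod c * \<bar>ln (Im c)\<bar>)
            \<and> (\<exists>D. ((\<lambda>Y. Phi_app m U U1 \<alpha> c Y) has_vector_derivative D) (at 0 within {0..})
                   \<and> cmod (D - 1) \<le> C * \<alpha> * \<bar>ln (Im c)\<bar>)"
proof -
  obtain K1 where K1: "\<And>c. Im c > 0 \<and> cmod c < 1/2 \<and> cmod c < U 1 / 2 \<Longrightarrow>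
            cmod (integral {0..1} (g c) + 1 / c) \<le> K1 * \<bar>ln (Im c)\<bar>"
    using KL by blast
  define \<gamma>1 where "\<gamma>1 = min (1/2) (min ((1 - m\<^sup>2) / 6) (U 1 / 2))"
  have U1p: "U 1 > 0" using Upos[of 1] by simp
  have g1: "\<gamma>1 \<in> {0<..<1::real}" using mm U1p by (auto simp: \<gamma>1_def)
  define s0 where "s0 = sqrt (1 - m\<^sup>2)"
  define \<sigma> where "\<sigma> = sqrt ((1 - m\<^sup>2) / 2)"
  define C1 where "C1 = (3 / s0 + 3) / (\<sigma> * (1/2) * s0)"
  define QB where "QB = 4 / (1 - m\<^sup>2)"
  define Ca where "Ca = C1 / ln 2 + 4 * QB * \<bar>K1\<bar>"
  define Cb where "Cb = 1 / ln 2 + 8 * QB * \<bar>K1\<bar> + 10 * QB / ln 2"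
  have s0p: "s0 > 0" using mm by (simp add: s0_def)
  have \<sigma>p: "\<sigma> > 0" using mm by (simp add: \<sigma>_def)
  have C1p: "C1 \<ge> 0" using s0p \<sigma>p by (simp add: C1_def)
  have QBp: "QB \<ge> 0" using mm by (simp add: QB_def)
  show ?thesis
  proof (rule bexI[OF _ g1], rule exI[of _ "max Ca Cb"], intro ballI allI impI)
    fix \<alpha> :: real and c :: complex
    assume \<alpha>: "\<alpha> \<in> {0<..<1}" and c: "Im c > 0 \<and> cmod c < \<gamma>1"
    have \<alpha>': "0 < \<alpha>" "\<alpha> < 1" using \<alpha> by auto
    have c': "Im c > 0" "cmod c \<le> 1/2" "cmod c \<le> (1 - m\<^sup>2) / 6" "cmod c < 1/2" "cmod c < U 1 / 2"
      using c by (auto simp: \<gamma>1_def)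
    define l where "l = \<bar>ln (Im c)\<bar>"
    have l2: "l \<ge> ln 2"
    proof -
      have "Im c < 1/2" using abs_Im_le_cmod[of c] c'(1,4) by simp
      then have "ln (Im c) < ln (1/2)" using c'(1) by simp
      then have "ln (Im c) < - ln 2" by (simp add: ln_div)
      then show ?thesis unfolding l_def by linarith
    qed
    have ln2p: "ln (2::real) > 0" by simp
    have l1: "1 \<le> l / ln 2" using l2 ln2p by simp
    have lnn: "x \<le> x * l / ln 2" if "x \<ge> 0" for x
      using mult_left_mono[OF l1 that] by simp
    have T: "cmod (integral {0..1} (g c) + 1 / c) \<le> \<bar>K1\<bar> * l"
      using K1[of c] c' unfolding l_def by (smt (verit) abs_ge_self abs_ge_zero mult_right_mono)
    note E = est_c[OF \<alpha>' c'(1-3) T]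
    have Cap: "Ca \<le> max Ca Cb" "Cb \<le> max Ca Cb" by auto
    have cl0: "cmod c * l \<ge> 0" by (simp add: l_def)
    show "cmod (Phi_app m U U1 \<alpha> c 0 - (- c + complex_of_real (\<alpha> / sqrt (1 - m\<^sup>2))))
                \<le> max Ca Cb * \<alpha> * (cmod c * \<bar>ln (Im c)\<bar>)
            \<and> (\<exists>D. ((\<lambda>Y. Phi_app m U U1 \<alpha> c Y) has_vector_derivative D) (at 0 within {0..})
                   \<and> cmod (D - 1) \<le> max Ca Cb * \<alpha> * \<bar>ln (Im c)\<bar>)"
    proof
      have "cmod c * C1 + cmod c * (4 * QB * (\<bar>K1\<bar> * l)) \<le> Ca * (cmod c * l)"
      proof -
        have "cmod c * C1 \<le> cmod c * C1 * l / ln 2" by (rule lnn) (use C1p in simp)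
        then show ?thesis by (simp add: Ca_def algebra_simps)
      qed
      also have "\<dots> \<le> max Ca Cb * (cmod c * l)" by (rule mult_right_mono[OF Cap(1) cl0])
      finally have "\<alpha> * (cmod c * C1 + cmod c * (4 * QB * (\<bar>K1\<bar> * l))) \<le> \<alpha> * (max Ca Cb * (cmod c * l))"
        using \<alpha>' by (intro mult_left_mono) auto
      then show "cmod (Phi_app m U U1 \<alpha> c 0 - (- c + complex_of_real (\<alpha> / sqrt (1 - m\<^sup>2))))
                \<le> max Ca Cb * \<alpha> * (cmod c * \<bar>ln (Im c)\<bar>)"
        using E(1) unfolding C1_def QB_def s0_def \<sigma>_def l_def by (simp add: algebra_simps)
    next
      obtain D where D: "((\<lambda>Y. Phi_app m U U1 \<alpha> c Y) has_vector_derivative D) (at 0 within {0..})"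
        "cmod (D - 1) \<le> \<alpha> * (1 + 2 * (4 / (1 - m\<^sup>2)) * (4 * (\<bar>K1\<bar> * l) + 5))"
        using E(2) by blast
      have "1 + 2 * QB * (4 * (\<bar>K1\<bar> * l) + 5) \<le> Cb * l"
      proof -
        have b: "10 * QB \<le> 10 * QB * l / ln 2" by (rule lnn) (use QBp in simp)
        have e1: "Cb * l = l / ln 2 + 8 * QB * \<bar>K1\<bar> * l + 10 * QB * l / ln 2"
          by (simp add: Cb_def algebra_simps add_divide_distrib)
        have e2: "1 + 2 * QB * (4 * (\<bar>K1\<bar> * l) + 5) = 1 + 8 * QB * \<bar>K1\<bar> * l + 10 * QB"
          by (simp add: algebra_simps)
        show ?thesis unfolding e1 e2 using l1 b by linarith
      qed
      also have "\<dots> \<le> max Ca Cb * l" by (rule mult_right_mono[OF Cap(2)]) (simp add: l_def)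
      finally have "\<alpha> * (1 + 2 * QB * (4 * (\<bar>K1\<bar> * l) + 5)) \<le> \<alpha> * (max Ca Cb * l)"
        using \<alpha>' by (intro mult_left_mono) auto
      then have "cmod (D - 1) \<le> max Ca Cb * \<alpha> * \<bar>ln (Im c)\<bar>"
        using D(2) unfolding QB_def l_def by (simp add: algebra_simps)
      then show "\<exists>D. ((\<lambda>Y. Phi_app m U U1 \<alpha> c Y) has_vector_derivative D) (at 0 within {0..})
                   \<and> cmod (D - 1) \<le> max Ca Cb * \<alpha> * \<bar>ln (Im c)\<bar>"
        using D(1) by blast
    qed
  qed
qed

end

theorem lemma2p1:
  fixes m :: real and U U1 U2 U3 :: "real \<Rightarrow> real"
  assumes "0 < m" and "m < 1"
    and "propP m U U1 U2 U3"
  shows "(\<forall>\<alpha>\<in>{0<..<1}. \<forall>Y\<ge>0.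
            (\<lambda>c. Phi_app m U U1 \<alpha> c Y) holomorphic_on {c. Im c > 0})
       \<and> (\<exists>\<gamma>1\<in>{0<..<1::real}. \<exists>C::real. \<forall>\<alpha>\<in>{0<..<1::real}. \<forall>c.
            Im c > 0 \<and> cmod c < \<gamma>1 \<longrightarrow>
              cmod (Phi_app m U U1 \<alpha> c 0 - (- c + complex_of_real (\<alpha> / sqrt (1 - m\<^sup>2))))
                \<le> C * \<alpha> * (cmod c * \<bar>ln (Im c)\<bar>)
            \<and> (\<exists>D. ((\<lambda>Y. Phi_app m U U1 \<alpha> c Y) has_vector_derivative D) (at 0 within {0..})
                   \<and> cmod (D - 1) \<le> C * \<alpha> * \<bar>ln (Im c)\<bar>))"
proof -
  interpret LS m U U1 U2 U3 using assms by unfold_locales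
  show ?thesis using hol_Phi main2 by blast
qed


end
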